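(* Let $d\ge2$, $0<\lambda<\frac12$, and let $X$ be a $d$-dimensional $(d+1)$-partite weighted simplicial complex. Suppose every link of $X$ (including $X$ itself) has a connected underlying graph, and for every $s\in X(d-2)$ the link $X_s$ (a bipartite graph between its two remaining colors) is a $\frac{\lambda}{(d-1)\lambda+1}$-bipartite expander. Then for every face $s\in X$ (including $s=\emptyset$) and every two distinct colors $i,j\notin\mathrm{col}(s)$, the bipartite graph between $X_s[i]$ and $X_s[j]$ is a $\lambda$-bipartite expander.
   Context: **Weighted complex and links.** $X(k)$ denotes the faces of size $k+1$, weighted by a distribution on $d$-faces (choose a $d$-face, then a uniform chain of subfaces). The link of $s$ is $X_s=\{u\setminus s:s\subseteq u\in X\}$ with conditional measure. **Partite complexes and colors.** $X$ is $(d+1)$-partite if $X(0)=V_0\sqcup\dots\sqcup V_d$ and each $d$-face has exactly one vertex in each $V_i$. $\mathrm{col}(s)=\{i:s\cap V_i\neq\emptyset\}$, and $X_s[i]$ is the set of color-$i$ vertices of the link $X_s$. **Bipartite expansion.** A weighted bipartite graph is a $\mu$-bipartite expander if $\sup\{\langle Bf,g\rangle:\|f\|=\|g\|=1,\ f\perp\text{constants}\}\le\mu$ for its averaging operator $B$. *)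

theory Defs
  imports "HOL-Analysis.Analysis"
begin

text \<open>The complex X is the downward closure of F.\<close>

definition wcomplex :: "nat \<Rightarrow> 'v set set \<Rightarrow> ('v set \<Rightarrow> real) \<Rightarrow> bool" where
  "wcomplex d F w \<longleftrightarrow> finite F \<and> (\<forall>t\<in>F. finite t \<and> card t = d + 1)
     \<and> (\<forall>t\<in>F. w t > 0) \<and> sum w F = 1"

definition faces :: "'v set set \<Rightarrow> 'v set set" where
  "faces F = {s. \<exists>t\<in>F. s \<subseteq> t}"

definition facet_wt :: "'v set set \<Rightarrow> ('v set \<Rightarrow> real) \<Rightarrow> 'v set \<Rightarrow> real" where
  "facet_wt F w s = (\<Sum>t\<in>{t\<in>F. s \<subseteq> t}. w t)"

definition partite :: "nat \<Rightarrow> 'v set set \<Rightarrow> ('v \<Rightarrow> nat) \<Rightarrow> bool" where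
  "partite d F c \<longleftrightarrow> (\<forall>t\<in>F. bij_betw c t {0..d})"

definition link_vertices :: "'v set set \<Rightarrow> 'v set \<Rightarrow> 'v set" where
  "link_vertices F s = {v. v \<notin> s \<and> insert v s \<in> faces F}"

definition link_adj :: "'v set set \<Rightarrow> 'v set \<Rightarrow> 'v \<Rightarrow> 'v \<Rightarrow> bool" where
  "link_adj F s a b \<longleftrightarrow> a \<noteq> b \<and> a \<notin> s \<and> b \<notin> s \<and> insert a (insert b s) \<in> faces F"

definition link_connected :: "'v set set \<Rightarrow> 'v set \<Rightarrow> bool" where
  "link_connected F s \<longleftrightarrow>
     (\<forall>a\<in>link_vertices F s. \<forall>b\<in>link_vertices F s. (link_adj F s)\<^sup>*\<^sup>* a b)"

definition colored_link :: "('v \<Rightarrow> nat) \<Rightarrow> 'v set set \<Rightarrow> 'v set \<Rightarrow> nat \<Rightarrow> 'v set" where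
  "colored_link c F s i = {v\<in>link_vertices F s. c v = i}"

text \<open>A weighted bipartite graph: sides L, R and an edge distribution p on L x R.\<close>
definition marg_L :: "'v set \<Rightarrow> ('v \<Rightarrow> 'v \<Rightarrow> real) \<Rightarrow> 'v \<Rightarrow> real" where
  "marg_L R p a = (\<Sum>b\<in>R. p a b)"

definition marg_R :: "'v set \<Rightarrow> ('v \<Rightarrow> 'v \<Rightarrow> real) \<Rightarrow> 'v \<Rightarrow> real" where
  "marg_R L p b = (\<Sum>a\<in>L. p a b)"

definition winner :: "'v set \<Rightarrow> ('v \<Rightarrow> real) \<Rightarrow> ('v \<Rightarrow> real) \<Rightarrow> ('v \<Rightarrow> real) \<Rightarrow> real" where
  "winner A m f g = (\<Sum>x\<in>A. m x * f x * g x)"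

definition avg_op :: "'v set \<Rightarrow> ('v \<Rightarrow> 'v \<Rightarrow> real) \<Rightarrow> ('v \<Rightarrow> real) \<Rightarrow> 'v \<Rightarrow> real" where
  "avg_op R p f a = (\<Sum>b\<in>R. p a b * f b) / marg_L R p a"

definition bip_expander :: "'v set \<Rightarrow> 'v set \<Rightarrow> ('v \<Rightarrow> 'v \<Rightarrow> real) \<Rightarrow> real \<Rightarrow> bool" where
  "bip_expander L R p \<mu> \<longleftrightarrow>
     (\<forall>f g. winner R (marg_R L p) f f = 1 \<and> winner L (marg_L R p) g g = 1
        \<and> winner R (marg_R L p) f (\<lambda>_. 1) = 0
        \<longrightarrow> winner L (marg_L R p) (avg_op R p f) g \<le> \<mu>)"

definition link_edge_dist :: "'v set set \<Rightarrow> ('v set \<Rightarrow> real) \<Rightarrow> 'v set \<Rightarrow> 'v \<Rightarrow> 'v \<Rightarrow> real" where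
  "link_edge_dist F w s a b = facet_wt F w (insert a (insert b s)) / facet_wt F w s"

definition link_bip_expander ::
  "('v \<Rightarrow> nat) \<Rightarrow> 'v set set \<Rightarrow> ('v set \<Rightarrow> real) \<Rightarrow> 'v set \<Rightarrow> nat \<Rightarrow> nat \<Rightarrow> real \<Rightarrow> bool" where
  "link_bip_expander c F w s i j \<mu> =
     bip_expander (colored_link c F s i) (colored_link c F s j) (link_edge_dist F w s) \<mu>"

end

theory Submission
  imports Defs
begin

locale pc =
  fixes d :: nat and F :: "'v set set" and w :: "'v set \<Rightarrow> real" and c :: "'v \<Rightarrow> nat"
  assumes wc: "wcomplex d F w" and pt: "partite d F c"
begin

definition Fs :: "'v set \<Rightarrow> 'v set set" where "Fs s = {t\<in>F. s \<subseteq> t}"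
definition W :: "'v set \<Rightarrow> real" where "W s = facet_wt F w s"
definition E :: "'v set \<Rightarrow> ('v set \<Rightarrow> real) \<Rightarrow> real" where
  "E s h = (\<Sum>t\<in>Fs s. w t * h t) / W s"
definition vtx :: "'v set \<Rightarrow> nat \<Rightarrow> 'v" where "vtx t i = (THE v. v \<in> t \<and> c v = i)"

lemma finF: "finite F" using wc by (simp add: wcomplex_def)
lemma fin_t: "t \<in> F \<Longrightarrow> finite t" using wc by (simp add: wcomplex_def)
lemma wpos: "t \<in> F \<Longrightarrow> w t > 0" using wc by (simp add: wcomplex_def)
lemma bij: "t \<in> F \<Longrightarrow> bij_betw c t {0..d}" using pt by (simp add: partite_def)

lemma finFs: "finite (Fs s)" unfolding Fs_def using finF by simp

lemma col_le: "t \<in> F \<Longrightarrow> v \<in> t \<Longrightarrow> c v \<le> d"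
  using bij[of t] by (auto simp: bij_betw_def)

lemma vtx_ex: assumes "t \<in> F" "i \<le> d" shows "vtx t i \<in> t \<and> c (vtx t i) = i"
proof -
  have "i \<in> c ` t" using bij[OF assms(1)] assms(2) by (auto simp: bij_betw_def)
  then obtain v where v: "v \<in> t" "c v = i" by auto
  have inj: "inj_on c t" using bij[OF assms(1)] by (simp add: bij_betw_def)
  have u: "\<And>u. u \<in> t \<and> c u = i \<Longrightarrow> u = v"
    using inj v by (metis inj_on_contraD)
  have "(THE v. v \<in> t \<and> c v = i) = v" by (rule the_equality) (use v u in blast)+
  then show ?thesis using v by (simp add: vtx_def)
qed

lemma vtx_uniq: assumes "t \<in> F" "v \<in> t" shows "vtx t (c v) = v"
proof -
  have "c v \<le> d" using col_le assms by blast
  from vtx_ex[OF assms(1) this] have "vtx t (c v) \<in> t" "c (vtx t (c v)) = c v" by auto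
  moreover have "inj_on c t" using bij[OF assms(1)] by (simp add: bij_betw_def)
  ultimately show ?thesis using assms(2) by (metis inj_on_contraD)
qed

lemma vtx_eqI: "t \<in> F \<Longrightarrow> v \<in> t \<Longrightarrow> c v = i \<Longrightarrow> vtx t i = v"
  using vtx_uniq by blast

lemma faces_iff: "s \<in> faces F \<longleftrightarrow> (\<exists>t\<in>F. s \<subseteq> t)" by (simp add: faces_def)

lemma Fs_ne: "s \<in> faces F \<Longrightarrow> Fs s \<noteq> {}" by (auto simp: faces_def Fs_def)

lemma W_eq: "W s = (\<Sum>t\<in>Fs s. w t)" by (simp add: W_def facet_wt_def Fs_def)

lemma W_nonneg: "W s \<ge> 0" unfolding W_eq by (rule sum_nonneg) (auto simp: Fs_def less_imp_le wpos)

lemma W_pos: assumes "s \<in> faces F" shows "W s > 0"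
proof -
  obtain t where "t \<in> Fs s" using Fs_ne[OF assms] by auto
  then show ?thesis unfolding W_eq
    by (intro sum_pos2[OF finFs, of t]) (auto simp: Fs_def less_imp_le wpos)
qed

lemma E_cong: "(\<And>t. t \<in> Fs s \<Longrightarrow> h t = g t) \<Longrightarrow> E s h = E s g"
  unfolding E_def by (simp cong: sum.cong)

lemma E_const: "s \<in> faces F \<Longrightarrow> E s (\<lambda>_. a) = a"
  using W_pos[of s] unfolding E_def by (simp add: W_eq flip: sum_distrib_right)

lemma E_add: "E s (\<lambda>t. h t + g t) = E s h + E s g"
  unfolding E_def by (simp add: algebra_simps sum.distrib add_divide_distrib)

lemma E_diff: "E s (\<lambda>t. h t - g t) = E s h - E s g"
  unfolding E_def by (simp add: algebra_simps sum_subtractf diff_divide_distrib)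

lemma E_cmult: "E s (\<lambda>t. a * h t) = a * E s h"
  unfolding E_def by (simp add: sum_distrib_left mult_ac)

lemma E_multc: "E s (\<lambda>t. h t * a) = E s h * a"
  using E_cmult[of s a h] by (simp add: mult.commute)

lemma E_mono: "(\<And>t. t \<in> Fs s \<Longrightarrow> h t \<le> g t) \<Longrightarrow> E s h \<le> E s g"
  unfolding E_def using W_nonneg[of s]
  by (intro divide_right_mono sum_mono) (auto simp: Fs_def wpos less_imp_le intro!: mult_left_mono)

lemma E_nonneg: "(\<And>t. t \<in> Fs s \<Longrightarrow> h t \<ge> 0) \<Longrightarrow> E s h \<ge> 0"
  using E_mono[of s "\<lambda>_. 0" h] by (simp add: E_def)

lemma E_CS: "E s (\<lambda>t. a t * b t) \<le> sqrt (E s (\<lambda>t. (a t)\<^sup>2)) * sqrt (E s (\<lambda>t. (b t)\<^sup>2))"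
proof -
  have "(\<Sum>t\<in>Fs s. (sqrt (w t) * a t) * (sqrt (w t) * b t))\<^sup>2
     \<le> (\<Sum>t\<in>Fs s. (sqrt (w t) * a t)\<^sup>2) * (\<Sum>t\<in>Fs s. (sqrt (w t) * b t)\<^sup>2)"
    by (rule Cauchy_Schwarz_ineq_sum)
  moreover have "\<And>t. t \<in> Fs s \<Longrightarrow> (sqrt (w t) * a t) * (sqrt (w t) * b t) = w t * (a t * b t)"
    "\<And>t. t \<in> Fs s \<Longrightarrow> (sqrt (w t) * a t)\<^sup>2 = w t * (a t)\<^sup>2"
    "\<And>t. t \<in> Fs s \<Longrightarrow> (sqrt (w t) * b t)\<^sup>2 = w t * (b t)\<^sup>2"
    using wpos by (auto simp: Fs_def power2_eq_square less_imp_le)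
  ultimately have *: "(\<Sum>t\<in>Fs s. w t * (a t * b t))\<^sup>2
     \<le> (\<Sum>t\<in>Fs s. w t * (a t)\<^sup>2) * (\<Sum>t\<in>Fs s. w t * (b t)\<^sup>2)"
    by (simp cong: sum.cong)
  have "(E s (\<lambda>t. a t * b t))\<^sup>2 \<le> E s (\<lambda>t. (a t)\<^sup>2) * E s (\<lambda>t. (b t)\<^sup>2)"
    unfolding E_def using * W_nonneg[of s]
    by (simp add: power_divide divide_right_mono power2_eq_square)
  then have "\<bar>E s (\<lambda>t. a t * b t)\<bar> \<le> sqrt (E s (\<lambda>t. (a t)\<^sup>2) * E s (\<lambda>t. (b t)\<^sup>2))"
    using real_sqrt_abs real_sqrt_le_mono by metis
  then show ?thesis by (simp add: real_sqrt_mult)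
qed

lemma inj_face: "s \<in> faces F \<Longrightarrow> inj_on c s"
  using bij by (auto simp: faces_def bij_betw_def intro: inj_on_subset)

lemma Fs_D: "t \<in> Fs s \<Longrightarrow> t \<in> F \<and> s \<subseteq> t" by (simp add: Fs_def)

lemma vtx_notin: "t \<in> Fs s \<Longrightarrow> i \<le> d \<Longrightarrow> i \<notin> c ` s \<Longrightarrow> vtx t i \<notin> s"
  using vtx_ex[of t i] Fs_D[of t s] by (metis image_eqI)

lemma ins_vtx: assumes "t \<in> Fs s" "i \<le> d"
  shows "insert (vtx t i) s \<in> faces F" "t \<in> Fs (insert (vtx t i) s)"
  using vtx_ex[of t i] Fs_D[OF assms(1)] assms(2) by (auto simp: faces_def Fs_def)

lemma Fs_group: assumes "t0 \<in> Fs s" "m \<le> d"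
  shows "{t. t \<in> Fs s \<and> vtx t m = vtx t0 m} = Fs (insert (vtx t0 m) s)"
proof -
  have c0: "c (vtx t0 m) = m" using vtx_ex[of t0 m] Fs_D[OF assms(1)] assms(2) by auto
  show ?thesis
  proof (intro set_eqI iffI)
    fix t assume "t \<in> {t. t \<in> Fs s \<and> vtx t m = vtx t0 m}"
    then show "t \<in> Fs (insert (vtx t0 m) s)"
      using vtx_ex[of t m] assms(2) by (auto simp: Fs_def)
  next
    fix t assume t: "t \<in> Fs (insert (vtx t0 m) s)"
    then have "t \<in> F" "vtx t0 m \<in> t" "s \<subseteq> t" by (auto simp: Fs_def)
    then show "t \<in> {t. t \<in> Fs s \<and> vtx t m = vtx t0 m}"
      using vtx_eqI[of t "vtx t0 m" m] c0 by (auto simp: Fs_def)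
  qed
qed

lemma LOC: assumes "s \<in> faces F" "m \<le> d"
  shows "E s h = E s (\<lambda>t. E (insert (vtx t m) s) h)"
proof -
  let ?g = "\<lambda>t. vtx t m"
  have "(\<Sum>t\<in>Fs s. w t * h t) = (\<Sum>v\<in>?g ` Fs s. \<Sum>t\<in>{t. t \<in> Fs s \<and> ?g t = v}. w t * h t)"
    by (rule sum.image_gen[OF finFs])
  also have "\<dots> = (\<Sum>v\<in>?g ` Fs s. \<Sum>t\<in>Fs (insert v s). w t * h t)"
    using Fs_group[OF _ assms(2)] by (intro sum.cong) auto
  finally have L: "(\<Sum>t\<in>Fs s. w t * h t) = (\<Sum>v\<in>?g ` Fs s. \<Sum>t\<in>Fs (insert v s). w t * h t)" .
  have X: "(\<Sum>t\<in>{t. t \<in> Fs s \<and> ?g t = v}. w t * E (insert (?g t) s) h)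
        = (\<Sum>t\<in>Fs (insert v s). w t * h t)" if vv: "v \<in> ?g ` Fs s" for v
  proof -
    obtain t0 where t0: "t0 \<in> Fs s" "v = ?g t0" using vv by blast
    have "(\<Sum>t\<in>{t. t \<in> Fs s \<and> ?g t = v}. w t * E (insert (?g t) s) h)
          = (\<Sum>t\<in>{t. t \<in> Fs s \<and> ?g t = v}. w t * E (insert v s) h)"
      by (intro sum.cong) auto
    also have "\<dots> = (\<Sum>t\<in>Fs (insert v s). w t * E (insert v s) h)"
      using Fs_group[OF t0(1) assms(2)] t0(2) by simp
    also have "\<dots> = (\<Sum>t\<in>Fs (insert v s). w t * h t)"
    proof -
      have "W (insert v s) > 0" using W_pos ins_vtx(1)[OF t0(1) assms(2)] t0(2) by simp
      have "(\<Sum>t\<in>Fs (insert v s). w t * E (insert v s) h) = W (insert v s) * E (insert v s) h"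
        by (simp add: W_eq sum_distrib_right)
      also have "\<dots> = (\<Sum>t\<in>Fs (insert v s). w t * h t)"
        using \<open>W (insert v s) > 0\<close> by (simp add: E_def)
      finally show ?thesis .
    qed
    finally show ?thesis .
  qed
  have "(\<Sum>t\<in>Fs s. w t * E (insert (?g t) s) h)
     = (\<Sum>v\<in>?g ` Fs s. \<Sum>t\<in>{t. t \<in> Fs s \<and> ?g t = v}. w t * E (insert (?g t) s) h)"
    by (rule sum.image_gen[OF finFs])
  also have "\<dots> = (\<Sum>v\<in>?g ` Fs s. \<Sum>t\<in>Fs (insert v s). w t * h t)"
    by (rule sum.cong[OF refl]) (rule X)
  finally show ?thesis using L by (simp add: E_def)
qed

lemma E_cov: assumes "s \<in> faces F"
  shows "E s (\<lambda>t. (a t - x) * (b t - y)) = E s (\<lambda>t. a t * b t) - x * E s b - y * E s a + x * y"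
proof -
  have "E s (\<lambda>t. (a t - x) * (b t - y)) = E s (\<lambda>t. (a t * b t - x * b t) - (y * a t - x * y))"
    by (rule E_cong) (simp add: algebra_simps)
  also have "\<dots> = E s (\<lambda>t. a t * b t) - x * E s b - y * E s a + x * y"
    by (simp only: E_diff E_cmult E_const[OF assms])
  finally show ?thesis .
qed

lemma vtx_in_ins: assumes "t \<in> Fs s" "m \<le> d" "u \<in> Fs (insert (vtx t m) s)"
  shows "vtx u m = vtx t m"
proof -
  have "u \<in> F" "vtx t m \<in> u" using assms(3) by (auto simp: Fs_def)
  moreover have "c (vtx t m) = m" using vtx_ex[of t m] assms(1,2) by (auto simp: Fs_def)
  ultimately show ?thesis using vtx_eqI by blast
qed

definition EXP0 :: "'v set \<Rightarrow> nat \<Rightarrow> nat \<Rightarrow> real \<Rightarrow> bool" where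
  "EXP0 s i j \<mu> \<longleftrightarrow> (\<forall>f g. E s (\<lambda>t. f (vtx t j)) = 0 \<longrightarrow> E s (\<lambda>t. g (vtx t i)) = 0 \<longrightarrow>
     E s (\<lambda>t. g (vtx t i) * f (vtx t j))
       \<le> \<mu> * sqrt (E s (\<lambda>t. (f (vtx t j))\<^sup>2)) * sqrt (E s (\<lambda>t. (g (vtx t i))\<^sup>2)))"

lemma proj_bound:
  assumes s: "s \<in> faces F" and m: "m \<le> d" and ex: "EXP0 s m j \<Lambda>" and L0: "\<Lambda> \<ge> 0"
    and f0: "E s (\<lambda>t. f (vtx t j)) = 0"
  defines "\<Phi> \<equiv> \<lambda>v. E (insert v s) (\<lambda>u. f (vtx u j))"
  shows "E s (\<lambda>t. (\<Phi> (vtx t m))\<^sup>2) \<le> \<Lambda>\<^sup>2 * E s (\<lambda>t. (f (vtx t j))\<^sup>2)"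
proof -
  have P0: "E s (\<lambda>t. \<Phi> (vtx t m)) = 0"
    using f0 LOC[OF s m, of "\<lambda>u. f (vtx u j)"] by (simp add: \<Phi>_def)
  have "E s (\<lambda>t. \<Phi> (vtx t m) * f (vtx t j))
      = E s (\<lambda>t. E (insert (vtx t m) s) (\<lambda>u. \<Phi> (vtx u m) * f (vtx u j)))"
    by (rule LOC[OF s m])
  also have "\<dots> = E s (\<lambda>t. (\<Phi> (vtx t m))\<^sup>2)"
  proof (rule E_cong)
    fix t assume t: "t \<in> Fs s"
    have "E (insert (vtx t m) s) (\<lambda>u. \<Phi> (vtx u m) * f (vtx u j))
        = E (insert (vtx t m) s) (\<lambda>u. \<Phi> (vtx t m) * f (vtx u j))"
      by (rule E_cong) (simp add: vtx_in_ins[OF t m])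
    also have "\<dots> = (\<Phi> (vtx t m))\<^sup>2" by (simp add: E_cmult \<Phi>_def power2_eq_square)
    finally show "E (insert (vtx t m) s) (\<lambda>u. \<Phi> (vtx u m) * f (vtx u j)) = (\<Phi> (vtx t m))\<^sup>2" .
  qed
  finally have key: "E s (\<lambda>t. \<Phi> (vtx t m) * f (vtx t j)) = E s (\<lambda>t. (\<Phi> (vtx t m))\<^sup>2)" .
  have le: "E s (\<lambda>t. \<Phi> (vtx t m) * f (vtx t j))
       \<le> \<Lambda> * sqrt (E s (\<lambda>t. (f (vtx t j))\<^sup>2)) * sqrt (E s (\<lambda>t. (\<Phi> (vtx t m))\<^sup>2))"
    using ex f0 P0 unfolding EXP0_def by blast
  define a where "a = sqrt (E s (\<lambda>t. (\<Phi> (vtx t m))\<^sup>2))"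
  define b where "b = sqrt (E s (\<lambda>t. (f (vtx t j))\<^sup>2))"
  have Pn: "E s (\<lambda>t. (\<Phi> (vtx t m))\<^sup>2) \<ge> 0" by (rule E_nonneg) simp
  have fn: "E s (\<lambda>t. (f (vtx t j))\<^sup>2) \<ge> 0" by (rule E_nonneg) simp
  have a2: "a\<^sup>2 = E s (\<lambda>t. (\<Phi> (vtx t m))\<^sup>2)" using Pn by (simp add: a_def)
  have b2: "b\<^sup>2 = E s (\<lambda>t. (f (vtx t j))\<^sup>2)" using fn by (simp add: b_def)
  have a0: "a \<ge> 0" "b \<ge> 0" using Pn fn by (simp_all add: a_def b_def)
  have "a * a \<le> \<Lambda> * b * a" using le key a2 by (simp add: a_def b_def power2_eq_square)
  then have "a \<le> \<Lambda> * b" using a0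
    by (metis mult_right_le_imp_le order_le_less mult_nonneg_nonneg L0)
  then have "a\<^sup>2 \<le> (\<Lambda> * b)\<^sup>2" using a0 by (intro power_mono) auto
  then show ?thesis using a2 b2 by (simp add: power_mult_distrib)
qed

lemma cs2: assumes "A \<ge> 0" "B \<ge> 0" "(\<gamma>::real) \<ge> 0"
  shows "\<gamma> * sqrt A * sqrt B + y * x \<le> sqrt (\<gamma> * A + x\<^sup>2) * sqrt (\<gamma> * B + y\<^sup>2)"
proof -
  define x1 where "x1 = sqrt (\<gamma> * A)"
  define y1 where "y1 = sqrt (\<gamma> * B)"
  have e1: "\<gamma> * sqrt A * sqrt B = x1 * y1" using assms
    by (simp add: x1_def y1_def real_sqrt_mult)
  have e2: "\<gamma> * A = x1\<^sup>2" "\<gamma> * B = y1\<^sup>2" using assms by (simp_all add: x1_def y1_def)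
  have id: "(x1\<^sup>2 + x\<^sup>2) * (y1\<^sup>2 + y\<^sup>2) - (x1 * y1 + x * y)\<^sup>2 = (x1 * y - x * y1)\<^sup>2"
    by algebra
  have "(x1 * y - x * y1)\<^sup>2 \<ge> 0" by simp
  then have "(x1 * y1 + x * y)\<^sup>2 \<le> (x1\<^sup>2 + x\<^sup>2) * (y1\<^sup>2 + y\<^sup>2)" using id by linarith
  then have "x1 * y1 + x * y \<le> sqrt ((x1\<^sup>2 + x\<^sup>2) * (y1\<^sup>2 + y\<^sup>2))"
    by (simp add: real_le_rsqrt)
  then show ?thesis using e1 e2 by (simp add: real_sqrt_mult mult.commute)
qed

lemma E_sq_center: assumes "s \<in> faces F"
  shows "E s (\<lambda>t. (a t - x)\<^sup>2) = E s (\<lambda>t. (a t)\<^sup>2) - 2 * x * E s a + x\<^sup>2"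
proof -
  have "E s (\<lambda>t. (a t - x)\<^sup>2) = E s (\<lambda>t. (a t - x) * (a t - x))"
    by (rule E_cong) (simp add: power2_eq_square)
  also have "\<dots> = E s (\<lambda>t. a t * a t) - x * E s a - x * E s a + x * x"
    by (rule E_cov[OF assms])
  also have "E s (\<lambda>t. a t * a t) = E s (\<lambda>t. (a t)\<^sup>2)"
    by (rule E_cong) (simp add: power2_eq_square)
  finally show ?thesis by (simp add: power2_eq_square)
qed

lemma local_step:
  assumes s: "s \<in> faces F" and ijm: "i \<le> d" "j \<le> d" "m \<le> d"
    and g01: "0 \<le> \<gamma>" "\<gamma> \<le> 1" and L0: "\<Lambda> \<ge> 0"
    and exj: "EXP0 s m j \<Lambda>" and exi: "EXP0 s m i \<Lambda>"
    and loc: "\<forall>t\<in>Fs s. EXP0 (insert (vtx t m) s) i j \<gamma>"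
  shows "EXP0 s i j (\<gamma> + (1 - \<gamma>) * \<Lambda>\<^sup>2)"
  unfolding EXP0_def
proof (intro allI impI)
  fix f g
  assume f0: "E s (\<lambda>t. f (vtx t j)) = 0" and g0: "E s (\<lambda>t. g (vtx t i)) = 0"
  define \<Phi> where "\<Phi> = (\<lambda>v. E (insert v s) (\<lambda>u. f (vtx u j)))"
  define \<Psi> where "\<Psi> = (\<lambda>v. E (insert v s) (\<lambda>u. g (vtx u i)))"
  define Af where "Af = (\<lambda>v. E (insert v s) (\<lambda>u. (f (vtx u j))\<^sup>2) - (\<Phi> v)\<^sup>2)"
  define Ag where "Ag = (\<lambda>v. E (insert v s) (\<lambda>u. (g (vtx u i))\<^sup>2) - (\<Psi> v)\<^sup>2)"
  define \<mu> where "\<mu> = \<gamma> + (1 - \<gamma>) * \<Lambda>\<^sup>2"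
  have mu0: "\<mu> \<ge> 0" using g01 by (simp add: \<mu>_def)
  have B: "E (insert (vtx t m) s) (\<lambda>u. g (vtx u i) * f (vtx u j))
      \<le> \<gamma> * sqrt (Af (vtx t m)) * sqrt (Ag (vtx t m)) + \<Psi> (vtx t m) * \<Phi> (vtx t m)
     \<and> Af (vtx t m) \<ge> 0 \<and> Ag (vtx t m) \<ge> 0" if t: "t \<in> Fs s" for t
  proof -
    define s' where "s' = insert (vtx t m) s"
    have s': "s' \<in> faces F" using ins_vtx(1)[OF t ijm(3)] by (simp add: s'_def)
    define x where "x = \<Phi> (vtx t m)"
    define y where "y = \<Psi> (vtx t m)"
    have x: "E s' (\<lambda>u. f (vtx u j)) = x" by (simp add: x_def \<Phi>_def s'_def)
    have y: "E s' (\<lambda>u. g (vtx u i)) = y" by (simp add: y_def \<Psi>_def s'_def)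
    have f'0: "E s' (\<lambda>u. f (vtx u j) - x) = 0" using x by (simp add: E_diff E_const[OF s'])
    have g'0: "E s' (\<lambda>u. g (vtx u i) - y) = 0" using y by (simp add: E_diff E_const[OF s'])
    have ex': "EXP0 s' i j \<gamma>" using loc t by (simp add: s'_def)
    have le: "E s' (\<lambda>u. (g (vtx u i) - y) * (f (vtx u j) - x))
       \<le> \<gamma> * sqrt (E s' (\<lambda>u. (f (vtx u j) - x)\<^sup>2)) * sqrt (E s' (\<lambda>u. (g (vtx u i) - y)\<^sup>2))"
      using ex' f'0 g'0 unfolding EXP0_def
      by (elim allE[of _ "\<lambda>v. f v - x"] allE[of _ "\<lambda>v. g v - y"]) simp
    have c1: "E s' (\<lambda>u. (g (vtx u i) - y) * (f (vtx u j) - x))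
        = E s' (\<lambda>u. g (vtx u i) * f (vtx u j)) - y * x"
      using E_cov[OF s', of "\<lambda>u. g (vtx u i)" y "\<lambda>u. f (vtx u j)" x] x y by simp
    have c2: "E s' (\<lambda>u. (f (vtx u j) - x)\<^sup>2) = Af (vtx t m)"
      using E_sq_center[OF s', of "\<lambda>u. f (vtx u j)" x] x
      by (simp add: Af_def s'_def x_def power2_eq_square)
    have c3: "E s' (\<lambda>u. (g (vtx u i) - y)\<^sup>2) = Ag (vtx t m)"
      using E_sq_center[OF s', of "\<lambda>u. g (vtx u i)" y] y
      by (simp add: Ag_def s'_def y_def power2_eq_square)
    have n1: "E s' (\<lambda>u. (f (vtx u j) - x)\<^sup>2) \<ge> 0" by (rule E_nonneg) simp
    have n2: "E s' (\<lambda>u. (g (vtx u i) - y)\<^sup>2) \<ge> 0" by (rule E_nonneg) simp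
    show ?thesis using le c1 c2 c3 n1 n2 by (simp add: s'_def x_def y_def)
  qed
  define X where "X = (\<lambda>t. \<gamma> * Af (vtx t m) + (\<Phi> (vtx t m))\<^sup>2)"
  define Y where "Y = (\<lambda>t. \<gamma> * Ag (vtx t m) + (\<Psi> (vtx t m))\<^sup>2)"
  have "E s (\<lambda>t. g (vtx t i) * f (vtx t j))
      = E s (\<lambda>t. E (insert (vtx t m) s) (\<lambda>u. g (vtx u i) * f (vtx u j)))"
    by (rule LOC[OF s ijm(3)])
  also have "\<dots> \<le> E s (\<lambda>t. sqrt (X t) * sqrt (Y t))"
  proof (rule E_mono)
    fix t assume t: "t \<in> Fs s"
    from B[OF t] have "E (insert (vtx t m) s) (\<lambda>u. g (vtx u i) * f (vtx u j))
      \<le> \<gamma> * sqrt (Af (vtx t m)) * sqrt (Ag (vtx t m)) + \<Psi> (vtx t m) * \<Phi> (vtx t m)" by blast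
    also have "\<dots> \<le> sqrt (X t) * sqrt (Y t)"
      unfolding X_def Y_def using B[OF t] g01 by (intro cs2) auto
    finally show "E (insert (vtx t m) s) (\<lambda>u. g (vtx u i) * f (vtx u j)) \<le> sqrt (X t) * sqrt (Y t)" .
  qed
  also have "\<dots> \<le> sqrt (E s (\<lambda>t. (sqrt (X t))\<^sup>2)) * sqrt (E s (\<lambda>t. (sqrt (Y t))\<^sup>2))"
    by (rule E_CS)
  also have "E s (\<lambda>t. (sqrt (X t))\<^sup>2) = E s X"
    using B g01 by (intro E_cong) (simp add: X_def)
  also have "E s (\<lambda>t. (sqrt (Y t))\<^sup>2) = E s Y"
    using B g01 by (intro E_cong) (simp add: Y_def)
  finally have main: "E s (\<lambda>t. g (vtx t i) * f (vtx t j)) \<le> sqrt (E s X) * sqrt (E s Y)" .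
  have EX: "E s X \<le> \<mu> * E s (\<lambda>t. (f (vtx t j))\<^sup>2)"
  proof -
    have "E s (\<lambda>t. Af (vtx t m)) = E s (\<lambda>t. E (insert (vtx t m) s) (\<lambda>u. (f (vtx u j))\<^sup>2)) - E s (\<lambda>t. (\<Phi> (vtx t m))\<^sup>2)"
      unfolding Af_def by (rule E_diff)
    also have "E s (\<lambda>t. E (insert (vtx t m) s) (\<lambda>u. (f (vtx u j))\<^sup>2)) = E s (\<lambda>t. (f (vtx t j))\<^sup>2)"
      by (rule LOC[OF s ijm(3), symmetric])
    finally have A: "E s (\<lambda>t. Af (vtx t m)) = E s (\<lambda>t. (f (vtx t j))\<^sup>2) - E s (\<lambda>t. (\<Phi> (vtx t m))\<^sup>2)" .
    have P: "E s (\<lambda>t. (\<Phi> (vtx t m))\<^sup>2) \<le> \<Lambda>\<^sup>2 * E s (\<lambda>t. (f (vtx t j))\<^sup>2)"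
      using proj_bound[OF s ijm(3) exj L0 f0] by (simp add: \<Phi>_def)
    have "E s X = \<gamma> * E s (\<lambda>t. Af (vtx t m)) + E s (\<lambda>t. (\<Phi> (vtx t m))\<^sup>2)"
      unfolding X_def by (simp add: E_add E_cmult)
    also have "\<dots> = \<gamma> * E s (\<lambda>t. (f (vtx t j))\<^sup>2) + (1 - \<gamma>) * E s (\<lambda>t. (\<Phi> (vtx t m))\<^sup>2)"
      unfolding A by (simp add: algebra_simps)
    also have "\<dots> \<le> \<gamma> * E s (\<lambda>t. (f (vtx t j))\<^sup>2) + (1 - \<gamma>) * (\<Lambda>\<^sup>2 * E s (\<lambda>t. (f (vtx t j))\<^sup>2))"
      using P g01 by (intro add_left_mono mult_left_mono) auto
    finally show ?thesis by (simp add: \<mu>_def algebra_simps)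
  qed
  have EY: "E s Y \<le> \<mu> * E s (\<lambda>t. (g (vtx t i))\<^sup>2)"
  proof -
    have "E s (\<lambda>t. Ag (vtx t m)) = E s (\<lambda>t. E (insert (vtx t m) s) (\<lambda>u. (g (vtx u i))\<^sup>2)) - E s (\<lambda>t. (\<Psi> (vtx t m))\<^sup>2)"
      unfolding Ag_def by (rule E_diff)
    also have "E s (\<lambda>t. E (insert (vtx t m) s) (\<lambda>u. (g (vtx u i))\<^sup>2)) = E s (\<lambda>t. (g (vtx t i))\<^sup>2)"
      by (rule LOC[OF s ijm(3), symmetric])
    finally have A: "E s (\<lambda>t. Ag (vtx t m)) = E s (\<lambda>t. (g (vtx t i))\<^sup>2) - E s (\<lambda>t. (\<Psi> (vtx t m))\<^sup>2)" .
    have P: "E s (\<lambda>t. (\<Psi> (vtx t m))\<^sup>2) \<le> \<Lambda>\<^sup>2 * E s (\<lambda>t. (g (vtx t i))\<^sup>2)"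
      using proj_bound[OF s ijm(3) exi L0 g0] by (simp add: \<Psi>_def)
    have "E s Y = \<gamma> * E s (\<lambda>t. Ag (vtx t m)) + E s (\<lambda>t. (\<Psi> (vtx t m))\<^sup>2)"
      unfolding Y_def by (simp add: E_add E_cmult)
    also have "\<dots> = \<gamma> * E s (\<lambda>t. (g (vtx t i))\<^sup>2) + (1 - \<gamma>) * E s (\<lambda>t. (\<Psi> (vtx t m))\<^sup>2)"
      unfolding A by (simp add: algebra_simps)
    also have "\<dots> \<le> \<gamma> * E s (\<lambda>t. (g (vtx t i))\<^sup>2) + (1 - \<gamma>) * (\<Lambda>\<^sup>2 * E s (\<lambda>t. (g (vtx t i))\<^sup>2))"
      using P g01 by (intro add_left_mono mult_left_mono) auto
    finally show ?thesis by (simp add: \<mu>_def algebra_simps)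
  qed
  have "sqrt (E s X) * sqrt (E s Y) \<le> sqrt (\<mu> * E s (\<lambda>t. (f (vtx t j))\<^sup>2)) * sqrt (\<mu> * E s (\<lambda>t. (g (vtx t i))\<^sup>2))"
  proof -
    have X0: "E s X \<ge> 0" using B g01 by (intro E_nonneg) (simp add: X_def)
    have Y0: "E s Y \<ge> 0" using B g01 by (intro E_nonneg) (simp add: Y_def)
    show ?thesis using EX EY X0 Y0 by (intro mult_mono) auto
  qed
  also have "\<dots> = \<mu> * sqrt (E s (\<lambda>t. (f (vtx t j))\<^sup>2)) * sqrt (E s (\<lambda>t. (g (vtx t i))\<^sup>2))"
    using mu0 by (simp add: real_sqrt_mult)
  finally show "E s (\<lambda>t. g (vtx t i) * f (vtx t j))
    \<le> (\<gamma> + (1 - \<gamma>) * \<Lambda>\<^sup>2) * sqrt (E s (\<lambda>t. (f (vtx t j))\<^sup>2)) * sqrt (E s (\<lambda>t. (g (vtx t i))\<^sup>2))"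
    using main by (simp add: \<mu>_def)
qed

lemma EXP0_mono: assumes a: "EXP0 s i j \<mu>" and b: "\<mu> \<le> \<mu>'" shows "EXP0 s i j \<mu>'"
  unfolding EXP0_def
proof (intro allI impI)
  fix f g assume f0: "E s (\<lambda>t. f (vtx t j)) = 0" and g0: "E s (\<lambda>t. g (vtx t i)) = 0"
  have "E s (\<lambda>t. g (vtx t i) * f (vtx t j))
     \<le> \<mu> * sqrt (E s (\<lambda>t. (f (vtx t j))\<^sup>2)) * sqrt (E s (\<lambda>t. (g (vtx t i))\<^sup>2))"
    using a f0 g0 unfolding EXP0_def by blast
  also have "\<dots> \<le> \<mu>' * sqrt (E s (\<lambda>t. (f (vtx t j))\<^sup>2)) * sqrt (E s (\<lambda>t. (g (vtx t i))\<^sup>2))"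
  proof -
    have "E s (\<lambda>t. (f (vtx t j))\<^sup>2) \<ge> 0" "E s (\<lambda>t. (g (vtx t i))\<^sup>2) \<ge> 0"
      by (rule E_nonneg, simp)+
    then show ?thesis using b by (intro mult_right_mono) auto
  qed
  finally show "E s (\<lambda>t. g (vtx t i) * f (vtx t j))
     \<le> \<mu>' * sqrt (E s (\<lambda>t. (f (vtx t j))\<^sup>2)) * sqrt (E s (\<lambda>t. (g (vtx t i))\<^sup>2))" .
qed

lemma E_sq_zero: assumes "s \<in> faces F" "E s (\<lambda>t. (h t)\<^sup>2) = 0" "t \<in> Fs s"
  shows "h t = 0"
proof -
  have W: "W s > 0" using W_pos[OF assms(1)] .
  have S: "(\<Sum>t\<in>Fs s. w t * (h t)\<^sup>2) = 0" using assms(2) W by (simp add: E_def)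
  have nn: "\<And>x. x \<in> Fs s \<Longrightarrow> w x * (h x)\<^sup>2 \<ge> 0" using wpos by (auto simp: Fs_def less_imp_le)
  have iff: "(\<Sum>x\<in>Fs s. w x * (h x)\<^sup>2) = 0 \<longleftrightarrow> (\<forall>x\<in>Fs s. w x * (h x)\<^sup>2 = 0)"
    by (rule sum_nonneg_eq_0_iff[OF finFs]) (rule nn)
  have "\<forall>x\<in>Fs s. w x * (h x)\<^sup>2 = 0" using iff S by simp
  then have "w t * (h t)\<^sup>2 = 0" using assms(3) by blast
  moreover have "w t > 0" using wpos assms(3) by (simp add: Fs_def)
  ultimately show ?thesis by simp
qed

definition EXP1 :: "'v set \<Rightarrow> nat \<Rightarrow> nat \<Rightarrow> real \<Rightarrow> bool" where
  "EXP1 s i j \<mu> \<longleftrightarrow> (\<forall>f g. E s (\<lambda>t. f (vtx t j)) = 0 \<longrightarrow> E s (\<lambda>t. (f (vtx t j))\<^sup>2) = 1 \<longrightarrow>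
     E s (\<lambda>t. (g (vtx t i))\<^sup>2) = 1 \<longrightarrow> E s (\<lambda>t. g (vtx t i) * f (vtx t j)) \<le> \<mu>)"

lemma EXP1_EXP0: assumes s: "s \<in> faces F" and mu: "\<mu> \<ge> 0" and ex: "EXP1 s i j \<mu>"
  shows "EXP0 s i j \<mu>"
  unfolding EXP0_def
proof (intro allI impI)
  fix f g assume f0: "E s (\<lambda>t. f (vtx t j)) = 0" and g0: "E s (\<lambda>t. g (vtx t i)) = 0"
  define a where "a = E s (\<lambda>t. (f (vtx t j))\<^sup>2)"
  define b where "b = E s (\<lambda>t. (g (vtx t i))\<^sup>2)"
  have a0: "a \<ge> 0" unfolding a_def by (rule E_nonneg) simp
  have b0: "b \<ge> 0" unfolding b_def by (rule E_nonneg) simp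
  show "E s (\<lambda>t. g (vtx t i) * f (vtx t j)) \<le> \<mu> * sqrt a * sqrt b"
  proof (cases "a = 0 \<or> b = 0")
    case True
    then have "E s (\<lambda>t. g (vtx t i) * f (vtx t j)) = E s (\<lambda>_. 0)"
    proof
      assume "a = 0"
      then show ?thesis using E_sq_zero[OF s, of "\<lambda>t. f (vtx t j)"] by (intro E_cong) (simp add: a_def)
    next
      assume "b = 0"
      then show ?thesis using E_sq_zero[OF s, of "\<lambda>t. g (vtx t i)"] by (intro E_cong) (simp add: b_def)
    qed
    then show ?thesis using True E_const[OF s, of 0] by auto
  next
    case False
    then have ap: "a > 0" and bp: "b > 0" using a0 b0 by auto
    define f' where "f' = (\<lambda>v. (1 / sqrt a) * f v)"
    define g' where "g' = (\<lambda>v. (1 / sqrt b) * g v)"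
    have "E s (\<lambda>t. f' (vtx t j)) = 0" using f0 E_cmult[of s "1/sqrt a" "\<lambda>t. f (vtx t j)"] by (simp add: f'_def)
    moreover have "E s (\<lambda>t. (f' (vtx t j))\<^sup>2) = 1"
    proof -
      have "E s (\<lambda>t. (f' (vtx t j))\<^sup>2) = E s (\<lambda>t. (1/a) * (f (vtx t j))\<^sup>2)"
        by (rule E_cong) (use ap in \<open>simp add: f'_def power_mult_distrib power_divide\<close>)
      also have "\<dots> = (1/a) * a" by (simp only: E_cmult a_def)
      finally show ?thesis using ap by simp
    qed
    moreover have "E s (\<lambda>t. (g' (vtx t i))\<^sup>2) = 1"
    proof -
      have "E s (\<lambda>t. (g' (vtx t i))\<^sup>2) = E s (\<lambda>t. (1/b) * (g (vtx t i))\<^sup>2)"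
        by (rule E_cong) (use bp in \<open>simp add: g'_def power_mult_distrib power_divide\<close>)
      also have "\<dots> = (1/b) * b" by (simp only: E_cmult b_def)
      finally show ?thesis using bp by simp
    qed
    ultimately have le: "E s (\<lambda>t. g' (vtx t i) * f' (vtx t j)) \<le> \<mu>"
      using ex unfolding EXP1_def by blast
    have "E s (\<lambda>t. g' (vtx t i) * f' (vtx t j)) = (1 / (sqrt a * sqrt b)) * E s (\<lambda>t. g (vtx t i) * f (vtx t j))"
      unfolding E_cmult[symmetric] by (rule E_cong) (simp add: f'_def g'_def field_simps)
    then have "E s (\<lambda>t. g (vtx t i) * f (vtx t j)) / (sqrt a * sqrt b) \<le> \<mu>" using le by simp
    then show ?thesis using ap bp by (simp add: divide_le_eq mult.assoc)
  qed
qed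

lemma EXP0_EXP1: assumes s: "s \<in> faces F" and mu: "\<mu> \<ge> 0" and ex: "EXP0 s i j \<mu>"
  shows "EXP1 s i j \<mu>"
  unfolding EXP1_def
proof (intro allI impI)
  fix f g assume f0: "E s (\<lambda>t. f (vtx t j)) = 0" and f1: "E s (\<lambda>t. (f (vtx t j))\<^sup>2) = 1"
    and g1: "E s (\<lambda>t. (g (vtx t i))\<^sup>2) = 1"
  define m where "m = E s (\<lambda>t. g (vtx t i))"
  define g' where "g' = (\<lambda>v. g v - m)"
  have g'0: "E s (\<lambda>t. g' (vtx t i)) = 0" by (simp add: g'_def E_diff E_const[OF s] m_def)
  have "E s (\<lambda>t. g' (vtx t i) * f (vtx t j)) = E s (\<lambda>t. (g (vtx t i) - m) * (f (vtx t j) - 0))"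
    by (simp add: g'_def)
  also have "\<dots> = E s (\<lambda>t. g (vtx t i) * f (vtx t j))"
    using E_cov[OF s, of "\<lambda>t. g (vtx t i)" m "\<lambda>t. f (vtx t j)" 0] f0 by simp
  finally have eq: "E s (\<lambda>t. g' (vtx t i) * f (vtx t j)) = E s (\<lambda>t. g (vtx t i) * f (vtx t j))" .
  have "E s (\<lambda>t. (g' (vtx t i))\<^sup>2) = 1 - 2 * m * m + m\<^sup>2"
    using E_sq_center[OF s, of "\<lambda>t. g (vtx t i)" m] g1 by (simp add: g'_def m_def)
  then have g'1: "E s (\<lambda>t. (g' (vtx t i))\<^sup>2) \<le> 1" by (simp add: power2_eq_square)
  have "E s (\<lambda>t. g' (vtx t i) * f (vtx t j))
     \<le> \<mu> * sqrt (E s (\<lambda>t. (f (vtx t j))\<^sup>2)) * sqrt (E s (\<lambda>t. (g' (vtx t i))\<^sup>2))"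
    using ex f0 g'0 unfolding EXP0_def by blast
  also have "\<dots> \<le> \<mu>" using f1 g'1 mu by (simp add: mult_left_le)
  finally show "E s (\<lambda>t. g (vtx t i) * f (vtx t j)) \<le> \<mu>" using eq by simp
qed

lemma fin_link: "finite (link_vertices F s)"
proof -
  have "link_vertices F s \<subseteq> \<Union>F"
  proof
    fix v assume "v \<in> link_vertices F s"
    then obtain t where "t \<in> F" "insert v s \<subseteq> t" by (auto simp: link_vertices_def faces_def)
    then show "v \<in> \<Union>F" by blast
  qed
  moreover have "finite (\<Union>F)" by (rule finite_Union[OF finF fin_t])
  ultimately show ?thesis by (rule finite_subset)
qed

lemma fin_cl: "finite (colored_link c F s i)"
  using fin_link[of s] by (simp add: colored_link_def)

lemma Lcap: assumes "t \<in> Fs s" "i \<le> d" "i \<notin> c ` s"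
  shows "{a \<in> colored_link c F s i. a \<in> t} = {vtx t i}"
proof -
  have tF: "t \<in> F" using assms(1) by (simp add: Fs_def)
  have v: "vtx t i \<in> t" "c (vtx t i) = i" using vtx_ex[OF tF assms(2)] by auto
  have "vtx t i \<in> colored_link c F s i"
    using vtx_notin[OF assms] ins_vtx(1)[OF assms(1,2)] v
    by (simp add: colored_link_def link_vertices_def)
  moreover have "a = vtx t i" if "a \<in> t" "c a = i" for a
    using vtx_eqI[OF tF that] by simp
  ultimately show ?thesis
  proof (intro set_eqI iffI)
    fix a assume "a \<in> {a \<in> colored_link c F s i. a \<in> t}"
    then have at: "a \<in> t" and ca: "c a = i" by (auto simp: colored_link_def)
    show "a \<in> {vtx t i}" using vtx_eqI[OF tF at ca] by simp
  next
    fix a assume "a \<in> {vtx t i}"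
    then show "a \<in> {a \<in> colored_link c F s i. a \<in> t}"
      using \<open>vtx t i \<in> colored_link c F s i\<close> v by blast
  qed
qed

lemma sum_Lcap: assumes "t \<in> Fs s" "i \<le> d" "i \<notin> c ` s"
  shows "(\<Sum>a\<in>colored_link c F s i. if a \<in> t then \<phi> a else 0) = \<phi> (vtx t i)"
proof -
  have "(\<Sum>a\<in>colored_link c F s i. if a \<in> t then \<phi> a else 0)
      = (\<Sum>a\<in>{a \<in> colored_link c F s i. a \<in> t}. \<phi> a)"
    by (rule sum.inter_filter[OF fin_cl, symmetric])
  also have "\<dots> = \<phi> (vtx t i)" using Lcap[OF assms] by simp
  finally show ?thesis .
qed

lemma p_eq: "link_edge_dist F w s a b = (\<Sum>t\<in>Fs s. if a \<in> t \<and> b \<in> t then w t else 0) / W s"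
proof -
  have "{t \<in> F. insert a (insert b s) \<subseteq> t} = {t \<in> Fs s. a \<in> t \<and> b \<in> t}"
    by (auto simp: Fs_def)
  then have "facet_wt F w (insert a (insert b s)) = (\<Sum>t\<in>{t \<in> Fs s. a \<in> t \<and> b \<in> t}. w t)"
    by (simp add: facet_wt_def)
  also have "\<dots> = (\<Sum>t\<in>Fs s. if a \<in> t \<and> b \<in> t then w t else 0)"
    by (rule sum.inter_filter[OF finFs])
  finally show ?thesis by (simp add: link_edge_dist_def W_def)
qed

lemma p_nonneg: "link_edge_dist F w s a b \<ge> 0"
proof -
  have "link_edge_dist F w s a b = W (insert a (insert b s)) / W s"
    by (simp add: link_edge_dist_def W_def)
  then show ?thesis using W_nonneg[of s] W_nonneg[of "insert a (insert b s)"] by simp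
qed

lemma DS: assumes s: "s \<in> faces F" and ij: "i \<le> d" "j \<le> d" "i \<notin> c ` s" "j \<notin> c ` s"
  shows "(\<Sum>a\<in>colored_link c F s i. \<Sum>b\<in>colored_link c F s j. link_edge_dist F w s a b * \<psi> a b)
       = E s (\<lambda>t. \<psi> (vtx t i) (vtx t j))"
proof -
  let ?L = "colored_link c F s i" and ?R = "colored_link c F s j"
  have "(\<Sum>a\<in>?L. \<Sum>b\<in>?R. link_edge_dist F w s a b * \<psi> a b)
      = (\<Sum>a\<in>?L. \<Sum>b\<in>?R. \<Sum>t\<in>Fs s. (if a \<in> t then (if b \<in> t then w t * \<psi> a b / W s else 0) else 0))"
  proof (intro sum.cong refl)
    fix a b
    have "link_edge_dist F w s a b * \<psi> a b = (\<Sum>t\<in>Fs s. (if a \<in> t \<and> b \<in> t then w t else 0) / W s * \<psi> a b)"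
      unfolding p_eq sum_divide_distrib sum_distrib_right ..
    also have "\<dots> = (\<Sum>t\<in>Fs s. (if a \<in> t then (if b \<in> t then w t * \<psi> a b / W s else 0) else 0))"
      by (rule sum.cong) auto
    finally show "link_edge_dist F w s a b * \<psi> a b = (\<Sum>t\<in>Fs s. (if a \<in> t then (if b \<in> t then w t * \<psi> a b / W s else 0) else 0))" .
  qed
  also have "\<dots> = (\<Sum>a\<in>?L. \<Sum>t\<in>Fs s. \<Sum>b\<in>?R. (if a \<in> t then (if b \<in> t then w t * \<psi> a b / W s else 0) else 0))"
    by (intro sum.cong refl) (rule sum.swap)
  also have "\<dots> = (\<Sum>t\<in>Fs s. \<Sum>a\<in>?L. \<Sum>b\<in>?R. (if a \<in> t then (if b \<in> t then w t * \<psi> a b / W s else 0) else 0))"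
    by (rule sum.swap)
  also have "\<dots> = (\<Sum>t\<in>Fs s. w t * \<psi> (vtx t i) (vtx t j) / W s)"
  proof (intro sum.cong refl)
    fix t assume t: "t \<in> Fs s"
    have "(\<Sum>a\<in>?L. \<Sum>b\<in>?R. (if a \<in> t then (if b \<in> t then w t * \<psi> a b / W s else 0) else 0))
        = (\<Sum>a\<in>?L. if a \<in> t then (\<Sum>b\<in>?R. if b \<in> t then w t * \<psi> a b / W s else 0) else 0)"
      by (intro sum.cong refl) simp
    also have "\<dots> = (\<Sum>b\<in>?R. if b \<in> t then w t * \<psi> (vtx t i) b / W s else 0)"
      by (rule sum_Lcap[OF t ij(1,3)])
    also have "\<dots> = w t * \<psi> (vtx t i) (vtx t j) / W s"
      by (rule sum_Lcap[OF t ij(2,4)])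
    finally show "(\<Sum>a\<in>?L. \<Sum>b\<in>?R. (if a \<in> t then (if b \<in> t then w t * \<psi> a b / W s else 0) else 0))
        = w t * \<psi> (vtx t i) (vtx t j) / W s" .
  qed
  also have "\<dots> = E s (\<lambda>t. \<psi> (vtx t i) (vtx t j))"
    by (simp add: E_def sum_divide_distrib)
  finally show ?thesis .
qed

lemma translate:
  assumes s: "s \<in> faces F" and ij: "i \<le> d" "j \<le> d" "i \<notin> c ` s" "j \<notin> c ` s"
  shows "link_bip_expander c F w s i j \<mu> \<longleftrightarrow> EXP1 s i j \<mu>"
proof -
  let ?L = "colored_link c F s i" and ?R = "colored_link c F s j" and ?p = "link_edge_dist F w s"
  have W1: "winner ?R (marg_R ?L ?p) f h = E s (\<lambda>t. f (vtx t j) * h (vtx t j))" for f h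
  proof -
    have "winner ?R (marg_R ?L ?p) f h = (\<Sum>b\<in>?R. \<Sum>a\<in>?L. ?p a b * (f b * h b))"
      by (simp add: winner_def marg_R_def sum_distrib_right mult.assoc)
    also have "\<dots> = (\<Sum>a\<in>?L. \<Sum>b\<in>?R. ?p a b * (f b * h b))" by (rule sum.swap)
    also have "\<dots> = E s (\<lambda>t. f (vtx t j) * h (vtx t j))" by (rule DS[OF s ij])
    finally show ?thesis .
  qed
  have W2: "winner ?L (marg_L ?R ?p) g g = E s (\<lambda>t. g (vtx t i) * g (vtx t i))" for g
  proof -
    have "winner ?L (marg_L ?R ?p) g g = (\<Sum>a\<in>?L. \<Sum>b\<in>?R. ?p a b * (g a * g a))"
      by (simp add: winner_def marg_L_def sum_distrib_right mult.assoc)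
    also have "\<dots> = E s (\<lambda>t. g (vtx t i) * g (vtx t i))" by (rule DS[OF s ij])
    finally show ?thesis .
  qed
  have W3: "winner ?L (marg_L ?R ?p) (avg_op ?R ?p f) g = E s (\<lambda>t. g (vtx t i) * f (vtx t j))" for f g
  proof -
    have "winner ?L (marg_L ?R ?p) (avg_op ?R ?p f) g = (\<Sum>a\<in>?L. (\<Sum>b\<in>?R. ?p a b * f b) * g a)"
      unfolding winner_def avg_op_def
    proof (intro sum.cong refl)
      fix a assume "a \<in> ?L"
      show "marg_L ?R ?p a * ((\<Sum>b\<in>?R. ?p a b * f b) / marg_L ?R ?p a) * g a
          = (\<Sum>b\<in>?R. ?p a b * f b) * g a"
      proof (cases "marg_L ?R ?p a = 0")
        case True
        have iff: "(\<Sum>b\<in>?R. ?p a b) = 0 \<longleftrightarrow> (\<forall>b\<in>?R. ?p a b = 0)"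
          by (rule sum_nonneg_eq_0_iff[OF fin_cl]) (rule p_nonneg)
        have "\<forall>b\<in>?R. ?p a b = 0"
          using True iff unfolding marg_L_def by simp
        then have "(\<Sum>b\<in>?R. ?p a b * f b) = 0" by simp
        then show ?thesis using True by simp
      qed simp
    qed
      also have "\<dots> = (\<Sum>a\<in>?L. \<Sum>b\<in>?R. ?p a b * (g a * f b))"
      by (intro sum.cong refl) (simp add: sum_distrib_right sum_distrib_left mult_ac)
    also have "\<dots> = E s (\<lambda>t. g (vtx t i) * f (vtx t j))" by (rule DS[OF s ij])
    finally show ?thesis .
  qed
  show ?thesis
    unfolding link_bip_expander_def bip_expander_def EXP1_def W1 W2 W3
    by (simp add: power2_eq_square) blast
qed

lemma faces_down: "B \<in> faces F \<Longrightarrow> A \<subseteq> B \<Longrightarrow> A \<in> faces F"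
  unfolding faces_def by blast

lemma face_colors: assumes "s \<in> faces F"
  shows "c ` s \<subseteq> {0..d}" "card (c ` s) = card s" "finite s"
proof -
  obtain t where t: "t \<in> F" "s \<subseteq> t" using assms by (auto simp: faces_def)
  show "c ` s \<subseteq> {0..d}" using col_le t by auto
  show "card (c ` s) = card s" using card_image[OF inj_face[OF assms]] .
  show "finite s" using fin_t[OF t(1)] t(2) by (rule finite_subset[rotated])
qed

lemma outside_card: assumes "s \<in> faces F"
  shows "card ({0..d} - c ` s) = d + 1 - card s"
  using face_colors[OF assms] by (simp add: card_Diff_subset finite_subset)

lemma two_outside: assumes s: "s \<in> faces F" and ij: "i \<le> d" "j \<le> d" "i \<notin> c ` s" "j \<notin> c ` s" "i \<noteq> j"
  shows "card s \<le> d - 1"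
proof -
  have "{i, j} \<subseteq> {0..d} - c ` s" using ij by auto
  then have "card {i, j} \<le> card ({0..d} - c ` s)" by (intro card_mono) auto
  then show ?thesis using outside_card[OF s] ij(5) by simp
qed

lemma third_color: assumes s: "s \<in> faces F" and cs: "card s < d - 1"
  shows "\<exists>m. m \<le> d \<and> m \<notin> c ` s \<and> m \<noteq> i \<and> m \<noteq> j"
proof (rule ccontr)
  assume "\<not> ?thesis"
  then have "{0..d} - c ` s \<subseteq> {i, j}" by auto
  then have "card ({0..d} - c ` s) \<le> card {i, j}" by (intro card_mono) auto
  also have "\<dots> \<le> 2" by (simp add: card_insert_if)
  finally show False using outside_card[OF s] cs by simp
qed

lemma only_two: assumes s: "s \<in> faces F" and cs: "card s = d - 1" and d: "d \<ge> 1"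
  and ij: "i \<le> d" "j \<le> d" "i \<notin> c ` s" "j \<notin> c ` s" "i \<noteq> j"
  and k: "k \<le> d" "k \<notin> c ` s"
  shows "k = i \<or> k = j"
proof (rule ccontr)
  assume nk: "\<not> (k = i \<or> k = j)"
  then have "{i, j, k} \<subseteq> {0..d} - c ` s" using ij k by auto
  then have "card {i, j, k} \<le> card ({0..d} - c ` s)" by (intro card_mono) auto
  moreover have "card {i, j, k} = 3" using nk ij(5) by auto
  ultimately show False using outside_card[OF s] cs d by simp
qed

lemma link_vtx_col: assumes "v \<in> link_vertices F s"
  shows "c v \<le> d" "c v \<notin> c ` s"
proof -
  obtain t where t: "t \<in> F" "insert v s \<subseteq> t" and vs: "v \<notin> s"
    using assms by (auto simp: link_vertices_def faces_def)
  show "c v \<le> d" using col_le t by auto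
  have inj: "inj_on c t" using bij[OF t(1)] by (simp add: bij_betw_def)
  show "c v \<notin> c ` s"
  proof
    assume "c v \<in> c ` s"
    then obtain x where x: "x \<in> s" "c x = c v" by auto
    then have "x = v" using inj t by (meson inj_onD insert_subset subsetD)
    then show False using x vs by simp
  qed
qed

lemma link_adj_sym: "link_adj F s a b \<Longrightarrow> link_adj F s b a"
  by (auto simp: link_adj_def insert_commute)

lemma link_adj_lv: assumes "link_adj F s a b"
  shows "a \<in> link_vertices F s" "b \<in> link_vertices F s"
proof -
  have f: "insert a (insert b s) \<in> faces F" "a \<notin> s" "b \<notin> s" using assms by (auto simp: link_adj_def)
  have "insert a s \<in> faces F" by (rule faces_down[OF f(1)]) blast
  moreover have "insert b s \<in> faces F" by (rule faces_down[OF f(1)]) blast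
  ultimately show "a \<in> link_vertices F s" "b \<in> link_vertices F s"
    using f by (simp_all add: link_vertices_def)
qed

lemma link_adj_col: assumes "link_adj F s a b" shows "c a \<noteq> c b"
proof -
  obtain t where t: "t \<in> F" "insert a (insert b s) \<subseteq> t" using assms by (auto simp: link_adj_def faces_def)
  have inj: "inj_on c t" using bij[OF t(1)] by (simp add: bij_betw_def)
  have "a \<noteq> b" "a \<in> t" "b \<in> t" using assms t by (auto simp: link_adj_def)
  then show ?thesis using inj by (meson inj_onD)
qed

definition ladj :: "'v set \<Rightarrow> nat \<Rightarrow> nat \<Rightarrow> 'v \<Rightarrow> 'v \<Rightarrow> bool" where
  "ladj s i j a b \<longleftrightarrow> link_adj F s a b \<and> c a \<in> {i, j} \<and> c b \<in> {i, j}"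

lemma ladj_mono: assumes "(ladj (insert u s) i j)\<^sup>*\<^sup>* x y" "u \<notin> s"
  shows "(ladj s i j)\<^sup>*\<^sup>* x y"
  using assms(1)
proof (rule mono_rtranclp[rule_format, rotated])
  fix a b assume h: "ladj (insert u s) i j a b"
  then have f: "insert a (insert b (insert u s)) \<in> faces F" "a \<noteq> b" "a \<notin> s" "b \<notin> s"
    "c a \<in> {i, j}" "c b \<in> {i, j}"
    by (auto simp: ladj_def link_adj_def)
  have "insert a (insert b s) \<in> faces F" by (rule faces_down[OF f(1)]) blast
  then show "ladj s i j a b" using f by (simp add: ladj_def link_adj_def)
qed

lemma mid_vertex: assumes "link_adj F s v v'" "i \<le> d" "i \<notin> c ` s" "c v \<noteq> i" "c v' \<noteq> i"
  shows "\<exists>z. c z = i \<and> link_adj F s z v \<and> link_adj F s z v'"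
proof -
  have f: "insert v (insert v' s) \<in> faces F" "v \<notin> s" "v' \<notin> s" using assms(1) by (auto simp: link_adj_def)
  obtain t where t: "t \<in> F" "insert v (insert v' s) \<subseteq> t" using f(1) by (auto simp: faces_def)
  define z where "z = vtx t i"
  have z: "z \<in> t" "c z = i" using vtx_ex[OF t(1) assms(2)] by (auto simp: z_def)
  have zs: "z \<notin> s" using z(2) assms(3) by force
  have zv: "z \<noteq> v" "z \<noteq> v'" using z(2) assms(4,5) by auto
  have "insert z (insert v s) \<in> faces F" "insert z (insert v' s) \<in> faces F"
    using t z(1) unfolding faces_def by blast+
  then show ?thesis using zs zv f z(2) by (auto simp: link_adj_def)
qed

lemma conn:
  assumes H: "\<forall>s'\<in>faces F. card s' \<le> d - 1 \<longrightarrow> link_connected F s'" and d1: "d \<ge> 1"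
    and ij: "i \<le> d" "j \<le> d" "i \<noteq> j"
  shows "s \<in> faces F \<Longrightarrow> card s \<le> d - 1 \<Longrightarrow> i \<notin> c ` s \<Longrightarrow> j \<notin> c ` s
    \<Longrightarrow> x \<in> link_vertices F s \<Longrightarrow> y \<in> link_vertices F s \<Longrightarrow> c x \<in> {i, j} \<Longrightarrow> c y \<in> {i, j}
    \<Longrightarrow> (ladj s i j)\<^sup>*\<^sup>* x y"
proof (induction "d - 1 - card s" arbitrary: s x y rule: less_induct)
  case less
  have lc: "(link_adj F s)\<^sup>*\<^sup>* x y"
    using H less.prems(1,2,5,6) unfolding link_connected_def by blast
  show ?case
  proof (cases "card s = d - 1")
    case True
    have X: "link_adj F s a b \<longrightarrow> ladj s i j a b" for a b
    proof
      assume ab: "link_adj F s a b"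
      have "c a \<in> {i, j}" using only_two[OF less.prems(1) True d1 ij(1,2) less.prems(3,4) ij(3)]
          link_vtx_col[OF link_adj_lv(1)[OF ab]] by blast
      moreover have "c b \<in> {i, j}" using only_two[OF less.prems(1) True d1 ij(1,2) less.prems(3,4) ij(3)]
          link_vtx_col[OF link_adj_lv(2)[OF ab]] by blast
      ultimately show "ladj s i j a b" using ab by (simp add: ladj_def)
    qed
    show ?thesis using lc
    proof (induction rule: rtranclp_induct)
      case (step b b')
      have "ladj s i j b b'" using X step.hyps(2) by blast
      with step.IH show ?case by (rule rtranclp.rtrancl_into_rtrancl)
    qed simp
  next
    case False
    then have cs: "card s < d - 1" using less.prems(2) by simp
    have Q: "(ladj s i j)\<^sup>*\<^sup>* x' y'"
      if u: "u \<in> link_vertices F s" and cx: "c x' \<in> {i, j}" and cy: "c y' \<in> {i, j}"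
        and xu: "x' = u \<or> link_adj F s x' u" and yu: "y' = u \<or> link_adj F s y' u" for u x' y'
    proof (cases "c u \<in> {i, j}")
      case True
      have 1: "(ladj s i j)\<^sup>*\<^sup>* x' u"
      proof (cases "x' = u")
        case False
        then have "ladj s i j x' u" using xu cx True by (simp add: ladj_def)
        then show ?thesis by (rule r_into_rtranclp)
      qed simp
      have 2: "(ladj s i j)\<^sup>*\<^sup>* u y'"
      proof (cases "y' = u")
        case False
        then have "link_adj F s u y'" using yu link_adj_sym by blast
        then have "ladj s i j u y'" using cy True by (simp add: ladj_def)
        then show ?thesis by (rule r_into_rtranclp)
      qed simp
      show ?thesis using 1 2 by (rule rtranclp_trans)
    next
      case False
      then have xa: "link_adj F s x' u" and ya: "link_adj F s y' u" using xu yu cx cy by auto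
      have us: "u \<notin> s" and uf: "insert u s \<in> faces F" using u by (auto simp: link_vertices_def)
      have fs: "finite s" using face_colors(3)[OF less.prems(1)] .
      have card': "card (insert u s) = Suc (card s)" using fs us by simp
      have lt: "d - 1 - card (insert u s) < d - 1 - card s" using card' cs by simp
      have cs': "card (insert u s) \<le> d - 1" using card' cs by simp
      have ij': "i \<notin> c ` insert u s" "j \<notin> c ` insert u s" using False less.prems(3,4) by auto
      have xl: "x' \<in> link_vertices F (insert u s)"
        using xa by (auto simp: link_adj_def link_vertices_def)
      have yl: "y' \<in> link_vertices F (insert u s)"
        using ya by (auto simp: link_adj_def link_vertices_def)
      have "(ladj (insert u s) i j)\<^sup>*\<^sup>* x' y'"
        using less.hyps[OF lt uf cs' ij' xl yl cx cy] by simp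
      then show ?thesis using ladj_mono us by blast
    qed
    have P: "\<exists>x'. c x' \<in> {i, j} \<and> (ladj s i j)\<^sup>*\<^sup>* x x' \<and> (x' = v \<or> link_adj F s x' v)"
      if "(link_adj F s)\<^sup>*\<^sup>* x v" for v
      using that
    proof (induction rule: rtranclp_induct)
      case base
      then show ?case using less.prems(7) by blast
    next
      case (step v v')
      obtain x' where x': "c x' \<in> {i, j}" "(ladj s i j)\<^sup>*\<^sup>* x x'" "x' = v \<or> link_adj F s x' v"
        using step.IH by blast
      have vl: "v \<in> link_vertices F s" using link_adj_lv(1)[OF step.hyps(2)] .
      obtain z where z: "c z \<in> {i, j}" "z = v \<or> link_adj F s z v" "z = v' \<or> link_adj F s z v'"
      proof (cases "c v \<in> {i, j}")
        case True
        then show ?thesis using that step.hyps(2) by blast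
      next
        case F1: False
        show ?thesis
        proof (cases "c v' \<in> {i, j}")
          case True
          then show ?thesis using that link_adj_sym[OF step.hyps(2)] by blast
        next
          case False
          obtain z where "c z = i" "link_adj F s z v" "link_adj F s z v'"
            using mid_vertex[OF step.hyps(2) ij(1) less.prems(3)] F1 False by auto
          then show ?thesis using that by blast
        qed
      qed
      have "(ladj s i j)\<^sup>*\<^sup>* x' z" using Q[OF vl x'(1) z(1) x'(3) z(2)] .
      then have "(ladj s i j)\<^sup>*\<^sup>* x z" using x'(2) by (rule rtranclp_trans[rotated])
      then show ?case using z(1,3) by blast
    qed
    obtain x' where x': "c x' \<in> {i, j}" "(ladj s i j)\<^sup>*\<^sup>* x x'" "x' = y \<or> link_adj F s x' y"
      using P[OF lc] by blast
    show ?thesis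
    proof (cases "x' = y")
      case True then show ?thesis using x' by simp
    next
      case False
      then have "ladj s i j x' y" using x' less.prems(8) by (auto simp: ladj_def)
      with x'(2) show ?thesis by (rule rtranclp.rtrancl_into_rtrancl)
    qed
  qed
qed

lemma E_strict: assumes "s \<in> faces F" "\<And>t. t \<in> Fs s \<Longrightarrow> h t < g t"
  shows "E s h < E s g"
proof -
  have "(\<Sum>t\<in>Fs s. w t * h t) < (\<Sum>t\<in>Fs s. w t * g t)"
  proof (rule sum_strict_mono[OF finFs Fs_ne[OF assms(1)]])
    fix t assume t: "t \<in> Fs s"
    have "w t > 0" using wpos t by (simp add: Fs_def)
    then show "w t * h t < w t * g t" using assms(2)[OF t] by simp
  qed
  then show ?thesis unfolding E_def using W_pos[OF assms(1)] by (simp add: divide_strict_right_mono)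
qed

lemma vtx_cl: assumes "t \<in> Fs s" "j \<le> d" "j \<notin> c ` s"
  shows "vtx t j \<in> colored_link c F s j"
  using Lcap[OF assms] by blast

lemma sq_tri: "((x::real) - z)\<^sup>2 \<le> 2 * (x - y)\<^sup>2 + 2 * (y - z)\<^sup>2"
proof -
  have "2 * (x - y)\<^sup>2 + 2 * (y - z)\<^sup>2 - (x - z)\<^sup>2 = ((x - y) - (y - z))\<^sup>2"
    by algebra
  moreover have "((x - y) - (y - z))\<^sup>2 \<ge> 0" by simp
  ultimately show ?thesis by linarith
qed

lemma edge_bound: assumes s: "s \<in> faces F" and ij: "i \<le> d" "j \<le> d" "i \<noteq> j"
    and ab: "ladj s i j a b"
  shows "\<exists>K\<ge>0. \<forall>h. (h a - h b)\<^sup>2 \<le> K * E s (\<lambda>t. (h (vtx t i) - h (vtx t j))\<^sup>2)"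
proof -
  have la: "link_adj F s a b" and ca: "c a \<in> {i, j}" and cb: "c b \<in> {i, j}"
    using ab by (auto simp: ladj_def)
  have cab: "c a \<noteq> c b" using link_adj_col[OF la] .
  obtain t where t: "t \<in> F" "insert a (insert b s) \<subseteq> t"
    using la by (auto simp: link_adj_def faces_def)
  have tF: "t \<in> Fs s" using t by (simp add: Fs_def)
  have va: "vtx t (c a) = a" and vb: "vtx t (c b) = b" using vtx_uniq t by auto
  have wt: "w t > 0" using wpos t(1) .
  define K where "K = W s / w t"
  have K0: "K \<ge> 0" using W_nonneg wt by (simp add: K_def)
  show ?thesis
  proof (intro exI[of _ K] conjI allI K0)
    fix h :: "'v \<Rightarrow> real"
    let ?X = "\<lambda>t. (h (vtx t i) - h (vtx t j))\<^sup>2"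
    have eq: "(h a - h b)\<^sup>2 = ?X t"
    proof (cases "c a = i")
      case True
      then have "c b = j" using cb cab by auto
      then show ?thesis using True va vb by simp
    next
      case False
      then have "c a = j" "c b = i" using ca cb cab by auto
      then show ?thesis using va vb power2_commute[of "h a" "h b"] by simp
    qed
    have "w t * ?X t \<le> (\<Sum>t\<in>Fs s. w t * ?X t)"
      by (rule member_le_sum[OF tF _ finFs]) (use wpos in \<open>auto simp: Fs_def less_imp_le\<close>)
    then have "w t * ?X t \<le> W s * E s ?X" using W_pos[OF s] by (simp add: E_def)
    then have "?X t \<le> K * E s ?X" using wt by (simp add: K_def field_simps)
    then show "(h a - h b)\<^sup>2 \<le> K * E s ?X" using eq by simp
  qed
qed

lemma path_bound: assumes s: "s \<in> faces F" and ij: "i \<le> d" "j \<le> d" "i \<noteq> j"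
    and ab: "(ladj s i j)\<^sup>*\<^sup>* a b"
  shows "\<exists>K\<ge>0. \<forall>h. (h a - h b)\<^sup>2 \<le> K * E s (\<lambda>t. (h (vtx t i) - h (vtx t j))\<^sup>2)"
  using ab
proof (induction rule: rtranclp_induct)
  case base
  show ?case by (intro exI[of _ 0]) simp
next
  case (step b b')
  obtain K1 where K1: "K1 \<ge> 0" "\<forall>h. (h a - h b)\<^sup>2 \<le> K1 * E s (\<lambda>t. (h (vtx t i) - h (vtx t j))\<^sup>2)"
    using step.IH by blast
  obtain K2 where K2: "K2 \<ge> 0" "\<forall>h. (h b - h b')\<^sup>2 \<le> K2 * E s (\<lambda>t. (h (vtx t i) - h (vtx t j))\<^sup>2)"
    using edge_bound[OF s ij step.hyps(2)] by blast
  show ?case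
  proof (intro exI[of _ "2 * K1 + 2 * K2"] conjI allI)
    show "0 \<le> 2 * K1 + 2 * K2" using K1 K2 by simp
    fix h :: "'v \<Rightarrow> real"
    have "(h a - h b')\<^sup>2 \<le> 2 * (h a - h b)\<^sup>2 + 2 * (h b - h b')\<^sup>2" by (rule sq_tri)
    also have "\<dots> \<le> 2 * (K1 * E s (\<lambda>t. (h (vtx t i) - h (vtx t j))\<^sup>2)) + 2 * (K2 * E s (\<lambda>t. (h (vtx t i) - h (vtx t j))\<^sup>2))"
      using K1(2) K2(2) by (intro add_mono mult_left_mono) auto
    finally show "(h a - h b')\<^sup>2 \<le> (2 * K1 + 2 * K2) * E s (\<lambda>t. (h (vtx t i) - h (vtx t j))\<^sup>2)"
      by (simp add: algebra_simps)
  qed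
qed

lemma gap: assumes s: "s \<in> faces F" and ij: "i \<le> d" "j \<le> d" "i \<noteq> j" "i \<notin> c ` s" "j \<notin> c ` s"
    and cn: "\<forall>b\<in>colored_link c F s j. \<forall>b'\<in>colored_link c F s j. (ladj s i j)\<^sup>*\<^sup>* b b'"
  shows "\<exists>\<mu>. 0 \<le> \<mu> \<and> \<mu> < 1 \<and> EXP0 s i j \<mu>"
proof -
  let ?R = "colored_link c F s j"
  let ?Q = "\<lambda>h. E s (\<lambda>t. (h (vtx t i) - h (vtx t j))\<^sup>2)"
  have "\<forall>p\<in>?R \<times> ?R. \<exists>K. K \<ge> 0 \<and> (\<forall>h. (h (fst p) - h (snd p))\<^sup>2 \<le> K * ?Q h)"
  proof
    fix p assume p: "p \<in> ?R \<times> ?R"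
    then have "(ladj s i j)\<^sup>*\<^sup>* (fst p) (snd p)" using cn by (auto simp: mem_Times_iff)
    from path_bound[OF s ij(1-3) this]
    show "\<exists>K. K \<ge> 0 \<and> (\<forall>h. (h (fst p) - h (snd p))\<^sup>2 \<le> K * ?Q h)" by blast
  qed
  from bchoice[OF this] obtain Kf where
    Kf': "\<forall>p\<in>?R \<times> ?R. Kf p \<ge> 0 \<and> (\<forall>h. (h (fst p) - h (snd p))\<^sup>2 \<le> Kf p * ?Q h)"
    by blast
  then have Kf: "\<And>p. p \<in> ?R \<times> ?R \<Longrightarrow> Kf p \<ge> 0 \<and> (\<forall>h. (h (fst p) - h (snd p))\<^sup>2 \<le> Kf p * ?Q h)"
    by blast
  define K where "K = 1 + (\<Sum>p\<in>?R \<times> ?R. Kf p)"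
  have fin: "finite (?R \<times> ?R)" using fin_cl by simp
  have KfK: "Kf p \<le> K" if "p \<in> ?R \<times> ?R" for p
  proof -
    have "Kf p \<le> (\<Sum>p\<in>?R \<times> ?R. Kf p)"
      by (rule member_le_sum[OF that _ fin]) (use Kf in blast)
    then show ?thesis by (simp add: K_def)
  qed
  have K1: "K \<ge> 1" using Kf by (simp add: K_def sum_nonneg)
  have Qn: "?Q h \<ge> 0" for h by (rule E_nonneg) simp
  have PB: "(h b - h b')\<^sup>2 \<le> K * ?Q h" if "b \<in> ?R" "b' \<in> ?R" for b b' h
  proof -
    have "(h b - h b')\<^sup>2 \<le> Kf (b, b') * ?Q h" using Kf[of "(b, b')"] that by simp
    also have "\<dots> \<le> K * ?Q h" using KfK[of "(b, b')"] that Qn[of h] by (intro mult_right_mono) auto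
    finally show ?thesis .
  qed
  define \<mu> where "\<mu> = 1 - 1 / (2 * K)"
  have mu: "0 \<le> \<mu>" "\<mu> < 1" using K1 by (auto simp: \<mu>_def field_simps)
  have "EXP1 s i j \<mu>"
    unfolding EXP1_def
  proof (intro allI impI)
    fix f g :: "'v \<Rightarrow> real"
    assume f0: "E s (\<lambda>t. f (vtx t j)) = 0" and f1: "E s (\<lambda>t. (f (vtx t j))\<^sup>2) = 1"
      and g1: "E s (\<lambda>t. (g (vtx t i))\<^sup>2) = 1"
    have "\<exists>t1\<in>Fs s. (f (vtx t1 j))\<^sup>2 \<ge> 1"
    proof (rule ccontr)
      assume "\<not> (\<exists>t1\<in>Fs s. (f (vtx t1 j))\<^sup>2 \<ge> 1)"
      then have "\<And>t. t \<in> Fs s \<Longrightarrow> (f (vtx t j))\<^sup>2 < 1" by (simp add: not_le)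
      then have "E s (\<lambda>t. (f (vtx t j))\<^sup>2) < E s (\<lambda>_. 1)" by (rule E_strict[OF s])
      then show False using f1 E_const[OF s] by simp
    qed
    then obtain t1 where t1: "t1 \<in> Fs s" "(f (vtx t1 j))\<^sup>2 \<ge> 1" by blast
    define x where "x = f (vtx t1 j)"
    have "\<exists>t2\<in>Fs s. x * f (vtx t2 j) \<le> 0"
    proof (rule ccontr)
      assume "\<not> (\<exists>t2\<in>Fs s. x * f (vtx t2 j) \<le> 0)"
      then have "\<And>t. t \<in> Fs s \<Longrightarrow> 0 < x * f (vtx t j)" by (simp add: not_le)
      then have "E s (\<lambda>_. 0) < E s (\<lambda>t. x * f (vtx t j))" by (rule E_strict[OF s])
      then show False using f0 E_const[OF s] by (simp add: E_cmult)
    qed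
    then obtain t2 where t2: "t2 \<in> Fs s" "x * f (vtx t2 j) \<le> 0" by blast
    define h where "h = (\<lambda>v. if c v = i then g v else f v)"
    have cv: "c (vtx t i) = i" "c (vtx t j) = j" if "t \<in> Fs s" for t
      using vtx_ex[of t i] vtx_ex[of t j] that ij(1,2) by (auto simp: Fs_def)
    have b1: "vtx t1 j \<in> ?R" and b2: "vtx t2 j \<in> ?R" using vtx_cl t1(1) t2(1) ij by auto
    have hb: "h (vtx t1 j) = x" "h (vtx t2 j) = f (vtx t2 j)"
      using cv[OF t1(1)] cv[OF t2(1)] ij(3) by (auto simp: h_def x_def)
    have "?Q h = E s (\<lambda>t. (g (vtx t i))\<^sup>2 + (f (vtx t j))\<^sup>2 - 2 * (g (vtx t i) * f (vtx t j)))"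
      by (rule E_cong) (use cv ij(3) in \<open>simp add: h_def power2_eq_square algebra_simps\<close>)
    also have "\<dots> = 2 - 2 * E s (\<lambda>t. g (vtx t i) * f (vtx t j))"
      by (simp only: E_diff E_add E_cmult f1 g1)
    finally have Qh: "?Q h = 2 - 2 * E s (\<lambda>t. g (vtx t i) * f (vtx t j))" .
    have "1 \<le> x\<^sup>2" using t1(2) by (simp add: x_def)
    also have "\<dots> \<le> (x - f (vtx t2 j))\<^sup>2"
    proof -
      have "(x - f (vtx t2 j))\<^sup>2 = x\<^sup>2 - 2 * (x * f (vtx t2 j)) + (f (vtx t2 j))\<^sup>2"
        by (simp add: power2_eq_square algebra_simps)
      moreover have "(f (vtx t2 j))\<^sup>2 \<ge> 0" by simp
      ultimately show ?thesis using t2(2) by linarith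
    qed
    also have "\<dots> = (h (vtx t1 j) - h (vtx t2 j))\<^sup>2" using hb by simp
    also have "\<dots> \<le> K * ?Q h" by (rule PB[OF b1 b2])
    finally have "1 \<le> K * (2 - 2 * E s (\<lambda>t. g (vtx t i) * f (vtx t j)))" using Qh by simp
    then have "1 / (2 * K) * 1 \<le> 1 / (2 * K) * (K * (2 - 2 * E s (\<lambda>t. g (vtx t i) * f (vtx t j))))"
      using K1 by (intro mult_left_mono) auto
    also have "\<dots> = 1 - E s (\<lambda>t. g (vtx t i) * f (vtx t j))" using K1 by (simp add: field_simps)
    finally show "E s (\<lambda>t. g (vtx t i) * f (vtx t j)) \<le> \<mu>" by (simp add: \<mu>_def)
  qed
  then show ?thesis using EXP1_EXP0[OF s mu(1)] mu by blast
qed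

lemma EXP0_Inf: assumes ne: "S \<noteq> {}" and all: "\<forall>\<mu>\<in>S. \<mu> \<ge> 0 \<and> EXP0 s i j \<mu>"
  shows "EXP0 s i j (Inf S)"
  unfolding EXP0_def
proof (intro allI impI)
  fix f g assume f0: "E s (\<lambda>t. f (vtx t j)) = 0" and g0: "E s (\<lambda>t. g (vtx t i)) = 0"
  define x where "x = E s (\<lambda>t. g (vtx t i) * f (vtx t j))"
  define C where "C = sqrt (E s (\<lambda>t. (f (vtx t j))\<^sup>2)) * sqrt (E s (\<lambda>t. (g (vtx t i))\<^sup>2))"
  have C0: "C \<ge> 0"
  proof -
    have "E s (\<lambda>t. (f (vtx t j))\<^sup>2) \<ge> 0" "E s (\<lambda>t. (g (vtx t i))\<^sup>2) \<ge> 0"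
      by (rule E_nonneg, simp)+
    then show ?thesis by (simp add: C_def)
  qed
  have le: "x \<le> \<mu> * C" if "\<mu> \<in> S" for \<mu>
    using all that f0 g0 unfolding EXP0_def x_def C_def by (simp add: mult.assoc)
  have bdd: "bdd_below S" using all by (auto intro: bdd_belowI)
  have "x \<le> Inf S * C"
  proof (cases "C = 0")
    case True
    obtain \<mu> where "\<mu> \<in> S" using ne by blast
    then show ?thesis using le True by simp
  next
    case False
    then have Cp: "C > 0" using C0 by simp
    have "x / C \<le> Inf S"
    proof (rule cInf_greatest[OF ne])
      fix \<mu> assume "\<mu> \<in> S"
      then show "x / C \<le> \<mu>" using le Cp by (simp add: divide_le_eq)
    qed
    then show ?thesis using Cp by (simp add: divide_le_eq)
  qed
  then show "E s (\<lambda>t. g (vtx t i) * f (vtx t j))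
    \<le> Inf S * sqrt (E s (\<lambda>t. (f (vtx t j))\<^sup>2)) * sqrt (E s (\<lambda>t. (g (vtx t i))\<^sup>2))"
    by (simp add: x_def C_def mult.assoc)
qed

lemma fix_alg: fixes lam L :: real and k :: nat
  assumes lam: "0 < lam" and L: "0 \<le> L" "L < 1"
    and h: "L \<le> lam / (real (Suc k) * lam + 1) + (1 - lam / (real (Suc k) * lam + 1)) * L\<^sup>2"
  shows "L \<le> lam / (real k * lam + 1)"
proof -
  define D where "D = real (Suc k) * lam + 1"
  define g where "g = lam / D"
  have Dp: "D > 0" using lam by (simp add: D_def add_pos_nonneg)
  have gD: "g * D = lam" using Dp by (simp add: g_def)
  have omg: "(1 - g) * D = real k * lam + 1" using gD by (simp add: algebra_simps D_def)
  have "0 \<le> (L - 1) * ((1 - g) * L - g)"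
  proof -
    have "(L - 1) * ((1 - g) * L - g) = (1 - g) * L\<^sup>2 - L + g"
      by (simp add: power2_eq_square algebra_simps)
    then show ?thesis using h by (simp add: g_def D_def)
  qed
  then have "(1 - g) * L - g \<le> 0"
  proof (rule contrapos_pp)
    assume "\<not> (1 - g) * L - g \<le> 0"
    then have "(L - 1) * ((1 - g) * L - g) < 0" using L(2) by (intro mult_neg_pos) auto
    then show "\<not> 0 \<le> (L - 1) * ((1 - g) * L - g)" by simp
  qed
  then have "((1 - g) * L) * D \<le> g * D" using Dp by (intro mult_right_mono) auto
  moreover have "((1 - g) * L) * D = ((1 - g) * D) * L" by (simp only: mult_ac)
  ultimately have "(real k * lam + 1) * L \<le> lam" using omg gD by simp
  moreover have "real k * lam + 1 > 0"
  proof -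
    have "real k * lam \<ge> 0" using lam by simp
    then show ?thesis by linarith
  qed
  ultimately show ?thesis by (simp add: le_divide_eq mult.commute)
qed

lemma main:
  assumes d2: "d \<ge> 2" and lam: "0 < lam"
    and H: "\<forall>s\<in>faces F. card s \<le> d - 1 \<longrightarrow> link_connected F s"
    and B: "\<forall>s\<in>faces F. card s = d - 1 \<longrightarrow>
           (\<forall>i j. i \<le> d \<and> j \<le> d \<and> i \<notin> c ` s \<and> j \<notin> c ` s \<and> i \<noteq> j \<longrightarrow>
              link_bip_expander c F w s i j (lam / ((real d - 1) * lam + 1)))"
  shows "s \<in> faces F \<Longrightarrow> card s \<le> d - 1 \<Longrightarrow> i \<le> d \<Longrightarrow> j \<le> d \<Longrightarrow> i \<notin> c ` s \<Longrightarrow> j \<notin> c ` s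
    \<Longrightarrow> i \<noteq> j \<Longrightarrow> EXP0 s i j (lam / (real (card s) * lam + 1))"
proof (induction "d - 1 - card s" arbitrary: s i j rule: less_induct)
  case less
  have s: "s \<in> faces F" using less.prems(1) .
  show ?case
  proof (cases "card s = d - 1")
    case True
    have "real d - 1 = real (card s)" using True d2 by (simp add: of_nat_diff)
    then have "link_bip_expander c F w s i j (lam / (real (card s) * lam + 1))"
      using B s True less.prems by auto
    then have "EXP1 s i j (lam / (real (card s) * lam + 1))"
      using translate[OF s less.prems(3,4,5,6)] by simp
    moreover have "0 \<le> lam / (real (card s) * lam + 1)" using lam by (intro divide_nonneg_nonneg) auto
    ultimately show ?thesis using EXP1_EXP0[OF s] by blast
  next
    case False
    then have cs: "card s < d - 1" using less.prems(2) by simp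
    define P where "P = {p. fst p \<le> d \<and> snd p \<le> d \<and> fst p \<notin> c ` s \<and> snd p \<notin> c ` s \<and> fst p \<noteq> snd p}"
    have finP: "finite P" by (rule finite_subset[of _ "{0..d} \<times> {0..d}"]) (auto simp: P_def)
    have "\<forall>p\<in>P. \<exists>\<mu>. 0 \<le> \<mu> \<and> \<mu> < 1 \<and> EXP0 s (fst p) (snd p) \<mu>"
    proof
      fix p assume p: "p \<in> P"
      let ?i = "fst p" and ?j = "snd p"
      have pi: "?i \<le> d" "?j \<le> d" "?i \<noteq> ?j" "?i \<notin> c ` s" "?j \<notin> c ` s" using p by (auto simp: P_def)
      have cn: "\<forall>b\<in>colored_link c F s ?j. \<forall>b'\<in>colored_link c F s ?j. (ladj s ?i ?j)\<^sup>*\<^sup>* b b'"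
        using conn[OF H _ pi(1,2,3) s less.prems(2) pi(4,5)] d2 by (auto simp: colored_link_def)
      show "\<exists>\<mu>. 0 \<le> \<mu> \<and> \<mu> < 1 \<and> EXP0 s ?i ?j \<mu>" by (rule gap[OF s pi cn])
    qed
    from bchoice[OF this] obtain M where M: "\<forall>p\<in>P. 0 \<le> M p \<and> M p < 1 \<and> EXP0 s (fst p) (snd p) (M p)"
      by blast
    define \<mu>0 where "\<mu>0 = Max (insert 0 (M ` P))"
    have fin0: "finite (insert 0 (M ` P))" using finP by simp
    have mu0ge: "M p \<le> \<mu>0" if "p \<in> P" for p
      unfolding \<mu>0_def using that fin0 by (intro Max_ge) auto
    have mu0nn: "0 \<le> \<mu>0" unfolding \<mu>0_def using fin0 by (intro Max_ge) auto
    have mu0lt: "\<mu>0 < 1"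
    proof -
      have "\<mu>0 \<in> insert 0 (M ` P)" unfolding \<mu>0_def using fin0 by (intro Max_in) auto
      then show ?thesis using M by auto
    qed
    define S where "S = {\<mu>. 0 \<le> \<mu> \<and> (\<forall>p\<in>P. EXP0 s (fst p) (snd p) \<mu>)}"
    have mu0S: "\<mu>0 \<in> S" unfolding S_def using mu0nn M mu0ge EXP0_mono by blast
    then have neS: "S \<noteq> {}" by blast
    have bdd: "bdd_below S" unfolding S_def by (auto intro: bdd_belowI)
    define L where "L = Inf S"
    have L0: "L \<ge> 0" unfolding L_def by (rule cInf_greatest[OF neS]) (simp add: S_def)
    have L1: "L < 1" using cInf_lower[OF mu0S bdd] mu0lt by (simp add: L_def)
    have LE: "EXP0 s (fst p) (snd p) L" if "p \<in> P" for p
      unfolding L_def using that by (intro EXP0_Inf[OF neS]) (auto simp: S_def)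
    define g' where "g' = lam / (real (Suc (card s)) * lam + 1)"
    have g'01: "0 \<le> g'" "g' \<le> 1"
    proof -
      have kl: "real (card s) * lam \<ge> 0" using lam by simp
      have De: "real (Suc (card s)) * lam + 1 = lam + (real (card s) * lam + 1)"
        by (simp add: algebra_simps)
      have Dp: "real (Suc (card s)) * lam + 1 > 0" using De kl lam by linarith
      have Dl: "lam \<le> real (Suc (card s)) * lam + 1" using De kl by linarith
      show "0 \<le> g'" unfolding g'_def using lam Dp by simp
      show "g' \<le> 1" unfolding g'_def using divide_le_eq_1_pos[OF Dp] Dl by simp
    qed
    have step: "EXP0 s (fst p) (snd p) (g' + (1 - g') * L\<^sup>2)" if p: "p \<in> P" for p
    proof -
      let ?i = "fst p" and ?j = "snd p"
      have pi: "?i \<le> d" "?j \<le> d" "?i \<noteq> ?j" "?i \<notin> c ` s" "?j \<notin> c ` s" using p by (auto simp: P_def)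
      obtain m where m: "m \<le> d" "m \<notin> c ` s" "m \<noteq> ?i" "m \<noteq> ?j" using third_color[OF s cs] by blast
      have Pmj: "(m, ?j) \<in> P" and Pmi: "(m, ?i) \<in> P" using m pi by (auto simp: P_def)
      have loc: "\<forall>t\<in>Fs s. EXP0 (insert (vtx t m) s) ?i ?j g'"
      proof
        fix t assume t: "t \<in> Fs s"
        let ?s' = "insert (vtx t m) s"
        have s': "?s' \<in> faces F" using ins_vtx(1)[OF t m(1)] .
        have ns: "vtx t m \<notin> s" using vtx_notin[OF t m(1,2)] .
        have cm: "c (vtx t m) = m" using vtx_ex[of t m] t m(1) by (auto simp: Fs_def)
        have fs: "finite s" using face_colors(3)[OF s] .
        have card': "card ?s' = Suc (card s)" using fs ns by simp
        have lt: "d - 1 - card ?s' < d - 1 - card s" using card' cs by simp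
        have cs': "card ?s' \<le> d - 1" using card' cs by simp
        have ij': "?i \<notin> c ` ?s'" "?j \<notin> c ` ?s'" using cm m(3,4) pi(4,5) by auto
        have "EXP0 ?s' ?i ?j (lam / (real (card ?s') * lam + 1))"
          by (rule less.hyps[OF lt s' cs' pi(1,2) ij' pi(3)])
        then show "EXP0 ?s' ?i ?j g'" using card' by (simp add: g'_def)
      qed
      have e1: "EXP0 s m ?j L" using LE[OF Pmj] by simp
      have e2: "EXP0 s m ?i L" using LE[OF Pmi] by simp
      show ?thesis by (rule local_step[OF s pi(1,2) m(1) g'01 L0 e1 e2 loc])
    qed
    have phiS: "g' + (1 - g') * L\<^sup>2 \<in> S"
      unfolding S_def using step g'01 by (auto intro!: add_nonneg_nonneg mult_nonneg_nonneg)
    have "L \<le> g' + (1 - g') * L\<^sup>2" using cInf_lower[OF phiS bdd] by (simp add: L_def)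
    then have "L \<le> lam / (real (card s) * lam + 1)"
      using fix_alg[OF lam L0 L1] by (simp add: g'_def)
    moreover have "(i, j) \<in> P" using less.prems by (simp add: P_def)
    ultimately show ?thesis using LE EXP0_mono by fastforce
  qed
qed

end

theorem corollary7p5:
  fixes d :: nat and lam :: real and F :: "'v set set" and w :: "'v set \<Rightarrow> real"
    and c :: "'v \<Rightarrow> nat"
  assumes "d \<ge> 2" and "0 < lam" and "lam < 1/2"
    and "wcomplex d F w" and "partite d F c"
    and "\<forall>s\<in>faces F. card s \<le> d - 1 \<longrightarrow> link_connected F s"
    and "\<forall>s\<in>faces F. card s = d - 1 \<longrightarrow>
           (\<forall>i j. i \<le> d \<and> j \<le> d \<and> i \<notin> c ` s \<and> j \<notin> c ` s \<and> i \<noteq> j \<longrightarrow>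
              link_bip_expander c F w s i j (lam / ((real d - 1) * lam + 1)))"
  shows "\<forall>s\<in>faces F. \<forall>i j. i \<le> d \<and> j \<le> d \<and> i \<notin> c ` s \<and> j \<notin> c ` s \<and> i \<noteq> j \<longrightarrow>
           link_bip_expander c F w s i j lam"
proof (intro ballI allI impI)
  interpret pc d F w c using assms(4,5) by unfold_locales
  fix s i j assume s: "s \<in> faces F" and ij: "i \<le> d \<and> j \<le> d \<and> i \<notin> c ` s \<and> j \<notin> c ` s \<and> i \<noteq> j"
  have cs: "card s \<le> d - 1" using two_outside[OF s] ij by blast
  have "EXP0 s i j (lam / (real (card s) * lam + 1))"
    using main[OF assms(1,2,6,7) s cs] ij by blast
  moreover have "lam / (real (card s) * lam + 1) \<le> lam"
    using assms(2) by (simp add: divide_le_eq add_pos_nonneg)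
  ultimately have "EXP0 s i j lam" by (rule EXP0_mono)
  then have "EXP1 s i j lam" using EXP0_EXP1[OF s] assms(2) by simp
  then show "link_bip_expander c F w s i j lam" using translate[OF s] ij by blast
qed

end
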